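(* Let $\mathcal A\subseteq\mathcal B(H)$ be a von Neumann algebra, $\xi\in H$, and let $\epsilon_A\in\mathcal A$ be the support projection of $\omega_\xi|_{\mathcal A}$. Suppose that for every self-adjoint $a\in\mathcal A$ and every $\epsilon>0$ there exists $\hat a\in\mathcal A'$ with $\|a\xi-\hat a\xi\|<\epsilon$. Then $\epsilon_A a=a\epsilon_A$ for every $a\in\mathcal A$, i.e. $\epsilon_A$ is central in $\mathcal A$.
   Context: $\omega_\xi(x)=\langle x\xi,\xi\rangle$. The support of a normal positive functional $\omega$ on a von Neumann algebra $\mathcal M$ is the smallest projection $p\in\mathcal M$ with $\omega(x)=\omega(pxp)$ for all $x\in\mathcal M$. *)

theory Defs
  imports Complex_Main
begin

class complex_inner = real_normed_vector +
  fixes scaleC :: "complex \<Rightarrow> 'a \<Rightarrow> 'a"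
    and cinner :: "'a \<Rightarrow> 'a \<Rightarrow> complex"
  assumes scaleC_of_real: "scaleC (complex_of_real r) x = scaleR r x"
    and scaleC_add_right: "scaleC c (x + y) = scaleC c x + scaleC c y"
    and scaleC_add_left: "scaleC (c + d) x = scaleC c x + scaleC d x"
    and scaleC_scaleC: "scaleC c (scaleC d x) = scaleC (c * d) x"
    and cinner_add_left: "cinner (x + y) z = cinner x z + cinner y z"
    and cinner_scaleC_left: "cinner (scaleC c x) y = c * cinner x y"
    and cinner_commute: "cinner y x = cnj (cinner x y)"
    and cinner_self_norm: "cinner x x = complex_of_real ((norm x)\<^sup>2)"

class chilbert = complex_inner + complete_space

definition clinear :: "('a::complex_inner \<Rightarrow> 'b::complex_inner) \<Rightarrow> bool" where
  "clinear T \<longleftrightarrow> (\<forall>x y. T (x + y) = T x + T y) \<and> (\<forall>c x. T (scaleC c x) = scaleC c (T x))"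

definition bounded_op :: "('a::complex_inner \<Rightarrow> 'a) \<Rightarrow> bool" where
  "bounded_op T \<longleftrightarrow> clinear T \<and> (\<exists>K. \<forall>x. norm (T x) \<le> K * norm x)"

definition is_adjoint :: "('a::complex_inner \<Rightarrow> 'a) \<Rightarrow> ('a \<Rightarrow> 'a) \<Rightarrow> bool" where
  "is_adjoint T S \<longleftrightarrow> (\<forall>x y. cinner (T x) y = cinner x (S y))"

text \<open>The Hilbert space adjoint (exists and is unique for bounded operators on a Hilbert space).\<close>
definition adj :: "('a::complex_inner \<Rightarrow> 'a) \<Rightarrow> ('a \<Rightarrow> 'a)" where
  "adj T = (SOME S. is_adjoint T S)"

definition commutant :: "('a::complex_inner \<Rightarrow> 'a) set \<Rightarrow> ('a \<Rightarrow> 'a) set" where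
  "commutant A = {T. bounded_op T \<and> (\<forall>S\<in>A. T \<circ> S = S \<circ> T)}"

text \<open>A von Neumann algebra on H: a self-adjoint set of bounded operators equal to its
bicommutant (equivalently, by the bicommutant theorem, a unital weakly closed *-subalgebra of B(H)).\<close>
definition von_neumann_algebra :: "('a::chilbert \<Rightarrow> 'a) set \<Rightarrow> bool" where
  "von_neumann_algebra A \<longleftrightarrow>
     (\<forall>T\<in>A. bounded_op T) \<and> (\<forall>T\<in>A. adj T \<in> A) \<and> commutant (commutant A) = A"

definition is_projection :: "('a::complex_inner \<Rightarrow> 'a) \<Rightarrow> bool" where
  "is_projection P \<longleftrightarrow> bounded_op P \<and> P \<circ> P = P \<and> adj P = P"

definition omega :: "'a::complex_inner \<Rightarrow> ('a \<Rightarrow> 'a) \<Rightarrow> complex" where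
  "omega \<xi> x = cinner (x \<xi>) \<xi>"

text \<open>p is the support projection of the restriction of \<omega>_\<xi> to A: the smallest projection
p in A (w.r.t. the usual order q \<circ> p = p) with \<omega>_\<xi>(x) = \<omega>_\<xi>(p x p) for all x in A.\<close>
definition is_support_projection :: "('a::complex_inner \<Rightarrow> 'a) set \<Rightarrow> 'a \<Rightarrow> ('a \<Rightarrow> 'a) \<Rightarrow> bool" where
  "is_support_projection A \<xi> p \<longleftrightarrow>
     p \<in> A \<and> is_projection p \<and> (\<forall>x\<in>A. omega \<xi> x = omega \<xi> (p \<circ> x \<circ> p)) \<and>
     (\<forall>q. q \<in> A \<and> is_projection q \<and> (\<forall>x\<in>A. omega \<xi> x = omega \<xi> (q \<circ> x \<circ> q))
          \<longrightarrow> q \<circ> p = p)"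

end

theory Submission
  imports Defs "HOL-Analysis.Elementary_Metric_Spaces"
begin


lemma cinner_zero_left[simp]: "cinner (0::'a::complex_inner) y = 0"
proof -
  have "cinner (0+0::'a) y = cinner 0 y + cinner 0 y" by (rule cinner_add_left)
  then show ?thesis by simp
qed

lemma cinner_diff_left: "cinner ((x::'a::complex_inner) - y) z = cinner x z - cinner y z"
proof -
  have "cinner ((x - y) + y) z = cinner (x-y) z + cinner y z" by (rule cinner_add_left)
  then show ?thesis by simp
qed

lemma cinner_minus_left: "cinner (- (x::'a::complex_inner)) z = - cinner x z"
  using cinner_diff_left[of 0 x z] by simp

lemma cinner_add_right: "cinner (x::'a::complex_inner) (y + z) = cinner x y + cinner x z"
  by (metis cinner_add_left cinner_commute complex_cnj_add)

lemma cinner_diff_right: "cinner (x::'a::complex_inner) (y - z) = cinner x y - cinner x z"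
  by (metis cinner_diff_left cinner_commute complex_cnj_diff)

lemma cinner_scaleC_right: "cinner (x::'a::complex_inner) (scaleC c y) = cnj c * cinner x y"
  by (metis cinner_scaleC_left cinner_commute complex_cnj_mult)

lemma cinner_zero_right[simp]: "cinner (x::'a::complex_inner) 0 = 0"
  by (metis cinner_zero_left cinner_commute complex_cnj_zero)

lemma cinner_self_eq_0: "cinner (x::'a::complex_inner) x = 0 \<longleftrightarrow> x = 0"
  by (simp add: cinner_self_norm)

lemma cinner_ext: "(\<And>z. cinner (x::'a::complex_inner) z = cinner y z) \<Longrightarrow> x = y"
  by (metis cinner_diff_left cinner_self_eq_0 diff_self eq_iff_diff_eq_0)

lemma scaleC_zero_left[simp]: "scaleC 0 (x::'a::complex_inner) = 0"
  by (metis of_real_0 scaleC_of_real scale_zero_left)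

lemma scaleC_one[simp]: "scaleC 1 (x::'a::complex_inner) = x"
  by (metis of_real_1 scaleC_of_real scaleR_one)

lemma scaleC_zero_right[simp]: "scaleC c (0::'a::complex_inner) = 0"
  by (rule cinner_ext) (simp add: cinner_scaleC_left)

lemma scaleR_scaleC: "scaleR r (x::'a::complex_inner) = scaleC (of_real r) x"
  by (simp add: scaleC_of_real)

lemma Re_cinner_self: "Re (cinner (x::'a::complex_inner) x) = (norm x)^2"
  by (simp add: cinner_self_norm)

lemma norm_scaleC: "norm (scaleC c (x::'a::complex_inner)) = cmod c * norm x"
proof -
  have "complex_of_real ((norm (scaleC c x))^2) = cinner (scaleC c x) (scaleC c x)"
    by (simp only: cinner_self_norm)
  also have "\<dots> = c * cnj c * cinner x x"
    by (simp add: cinner_scaleC_left cinner_scaleC_right)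
  also have "\<dots> = complex_of_real ((cmod c * norm x)^2)"
    by (simp only: cinner_self_norm complex_norm_square[symmetric] power_mult_distrib of_real_mult)
  finally have "(norm (scaleC c x))^2 = (cmod c * norm x)^2" using of_real_eq_iff by blast
  then show ?thesis by (simp add: power2_eq_iff_nonneg)
qed

lemma cauchy_schwarz: "cmod (cinner (x::'a::complex_inner) y) \<le> norm x * norm y"
proof (cases "y = 0")
  case True then show ?thesis by simp
next
  case False
  define N where "N = (norm y)^2"
  define w where "w = cinner x y"
  have N: "N > 0" using False by (simp add: N_def)
  define c where "c = w / of_real N"
  have yy: "cinner y y = of_real N" by (simp add: N_def cinner_self_norm)
  have yx: "cinner y x = cnj w" by (simp add: w_def cinner_commute[of y x])
  have "complex_of_real ((norm (x - scaleC c y))^2) = cinner (x - scaleC c y) (x - scaleC c y)"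
    by (simp add: cinner_self_norm)
  also have "\<dots> = cinner x x - cnj c * w - c * cnj w + c * cnj c * of_real N"
    by (simp add: cinner_diff_left cinner_diff_right cinner_scaleC_left cinner_scaleC_right yy yx w_def[symmetric] algebra_simps)
  also have "\<dots> = of_real ((norm x)^2) - (of_real (cmod w))^2 / of_real N"
  proof -
    have wc: "w * cnj w = (of_real (cmod w))^2" by (metis complex_norm_square of_real_power)
    have Nz: "complex_of_real N \<noteq> 0" using N by simp
    have 1: "cnj c * w = (of_real (cmod w))^2 / of_real N"
      by (simp add: c_def wc[symmetric] mult.commute)
    have 2: "c * cnj w = (of_real (cmod w))^2 / of_real N"
      by (simp add: c_def wc[symmetric])
    have 3: "c * cnj c * of_real N = (of_real (cmod w))^2 / of_real N"
      using Nz wc by (simp add: c_def field_simps power2_eq_square)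
    show ?thesis by (simp add: 1 2 3 cinner_self_norm)
  qed
  also have "\<dots> = of_real ((norm x)^2 - (cmod w)^2 / N)" by simp
  finally have "(norm (x - scaleC c y))^2 = (norm x)^2 - (cmod w)^2 / N"
    using of_real_eq_iff by blast
  then have "(cmod w)^2 / N \<le> (norm x)^2" by (smt (verit) zero_le_power2)
  then have "(cmod w)^2 \<le> (norm x * norm y)^2" using N
    by (simp add: N_def field_simps power_mult_distrib)
  then show ?thesis by (simp add: w_def power2_le_iff_abs_le)
qed


lemma norm_diff_scaleC_sq:
  "complex_of_real ((norm ((z::'a::complex_inner) - scaleC t n))^2) =
     of_real ((norm z)^2) - cnj t * cinner z n - t * cnj (cinner z n) + t * cnj t * of_real ((norm n)^2)"
proof -
  have "complex_of_real ((norm (z - scaleC t n))^2) = cinner (z - scaleC t n) (z - scaleC t n)"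
    by (simp only: cinner_self_norm)
  also have "\<dots> = cinner z z - cnj t * cinner z n - t * cinner n z + t * cnj t * cinner n n"
    by (simp add: cinner_diff_left cinner_diff_right cinner_scaleC_left cinner_scaleC_right algebra_simps)
  finally show ?thesis by (simp add: cinner_self_norm cinner_commute[of n z])
qed

lemma parallelogram:
  "(norm ((a::'a::complex_inner) - b))^2 + (norm (a + b))^2 = 2*(norm a)^2 + 2*(norm b)^2"
proof -
  have "complex_of_real ((norm (a - b))^2 + (norm (a + b))^2) = cinner (a-b) (a-b) + cinner (a+b) (a+b)"
    by (simp only: cinner_self_norm of_real_add)
  also have "\<dots> = 2 * cinner a a + 2 * cinner b b"
    by (simp add: cinner_diff_left cinner_diff_right cinner_add_left cinner_add_right algebra_simps)
  also have "\<dots> = complex_of_real (2*(norm a)^2 + 2*(norm b)^2)"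
    by (simp add: cinner_self_norm)
  finally show ?thesis using of_real_eq_iff by blast
qed

lemma bounded_linear_scaleC: "bounded_linear (scaleC c :: 'a::complex_inner \<Rightarrow> 'a)"
proof (rule bounded_linear_intro[where K="cmod c"])
  fix x y :: 'a show "scaleC c (x + y) = scaleC c x + scaleC c y" by (rule scaleC_add_right)
next
  fix r and x :: 'a show "scaleC c (scaleR r x) = scaleR r (scaleC c x)"
    by (simp add: scaleR_scaleC scaleC_scaleC mult.commute)
next
  fix x :: 'a show "norm (scaleC c x) \<le> norm x * cmod c" by (simp add: norm_scaleC)
qed

lemma bounded_linear_cinner_left: "bounded_linear (\<lambda>x::'a::complex_inner. cinner x y)"
proof (rule bounded_linear_intro[where K="norm y"])
  fix x z :: 'a show "cinner (x + z) y = cinner x y + cinner z y" by (rule cinner_add_left)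
next
  fix r and x :: 'a show "cinner (scaleR r x) y = scaleR r (cinner x y)"
    by (simp add: scaleR_scaleC cinner_scaleC_left scaleR_conv_of_real)
next
  fix x :: 'a show "norm (cinner x y) \<le> norm x * norm y" by (rule cauchy_schwarz)
qed

lemma clinear_diff: "clinear T \<Longrightarrow> T (x - y) = T x - T y"
  unfolding clinear_def by (metis add_diff_cancel diff_add_cancel)

lemma clinear_zero: "clinear T \<Longrightarrow> T 0 = 0"
  using clinear_diff[of T 0 0] by simp

lemma bounded_op_bl: "bounded_op T \<Longrightarrow> bounded_linear T"
proof -
  assume "bounded_op T"
  then obtain K where lin: "clinear T" and K: "\<forall>x. norm (T x) \<le> K * norm x"
    unfolding bounded_op_def by blast
  show "bounded_linear T"
  proof (rule bounded_linear_intro[where K=K])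
    fix x y show "T (x + y) = T x + T y" using lin unfolding clinear_def by blast
  next
    fix r x show "T (scaleR r x) = scaleR r (T x)"
      using lin unfolding clinear_def by (simp add: scaleR_scaleC)
  next
    fix x show "norm (T x) \<le> norm x * K" using K by (simp add: mult.commute)
  qed
qed

definition csubspace :: "'a::complex_inner set \<Rightarrow> bool" where
  "csubspace M \<longleftrightarrow> 0 \<in> M \<and> (\<forall>x\<in>M. \<forall>y\<in>M. x + y \<in> M) \<and> (\<forall>c. \<forall>x\<in>M. scaleC c x \<in> M)"

lemma csubspace_closure:
  assumes "csubspace M" shows "csubspace (closure M)"
  unfolding csubspace_def
proof (intro conjI ballI allI)
  show "0 \<in> closure M" using assms closure_subset unfolding csubspace_def by blast
next
  fix x y assume "x \<in> closure M" "y \<in> closure M"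
  then obtain X Y where X: "\<forall>n. X n \<in> M" "X \<longlonglongrightarrow> x" and Y: "\<forall>n. Y n \<in> M" "Y \<longlonglongrightarrow> y"
    unfolding closure_sequential by blast
  have "(\<lambda>n. X n + Y n) \<longlonglongrightarrow> x + y" using X Y by (intro tendsto_add)
  moreover have "\<forall>n. X n + Y n \<in> M" using X Y assms unfolding csubspace_def by blast
  ultimately show "x + y \<in> closure M" unfolding closure_sequential
    by (auto intro!: exI[where x="\<lambda>n. X n + Y n"])
next
  fix c x assume "x \<in> closure M"
  then obtain X where X: "\<forall>n. X n \<in> M" "X \<longlonglongrightarrow> x"
    unfolding closure_sequential by blast
  have "(\<lambda>n. scaleC c (X n)) \<longlonglongrightarrow> scaleC c x"
    using bounded_linear.tendsto[OF bounded_linear_scaleC X(2)] .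
  moreover have "\<forall>n. scaleC c (X n) \<in> M" using X assms unfolding csubspace_def by blast
  ultimately show "scaleC c x \<in> closure M" unfolding closure_sequential
    by (auto intro!: exI[where x="\<lambda>n. scaleC c (X n)"])
qed

lemma csubspace_diff: "csubspace M \<Longrightarrow> x \<in> M \<Longrightarrow> y \<in> M \<Longrightarrow> x - y \<in> M"
proof -
  assume M: "csubspace M" "x \<in> M" "y \<in> M"
  have "scaleC (-1) y = - y"
    by (rule cinner_ext) (simp add: cinner_scaleC_left cinner_minus_left)
  then have "- y \<in> M" using M unfolding csubspace_def by metis
  then show ?thesis using M unfolding csubspace_def by (metis diff_conv_add_uminus)
qed




lemma proj_exists:
  fixes x :: "'a::chilbert"
  assumes sub: "csubspace M" and cl: "closed M"
  shows "\<exists>m\<in>M. \<forall>n\<in>M. cinner (x - m) n = 0"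
proof -
  define D where "D = (\<lambda>m. norm (x - m)) ` M"
  define d where "d = Inf D"
  have M0: "0 \<in> M" using sub unfolding csubspace_def by blast
  have Dne: "D \<noteq> {}" using M0 unfolding D_def by blast
  have bdd: "bdd_below D" unfolding D_def bdd_below_def by (auto intro: exI[of _ 0])
  have dle: "\<forall>m\<in>M. d \<le> norm (x - m)"
    unfolding d_def D_def using bdd unfolding D_def by (auto intro: cInf_lower)
  have d0: "0 \<le> d" unfolding d_def using Dne by (auto intro!: cInf_greatest simp: D_def)
  have approx: "\<exists>m\<in>M. (norm (x - m))^2 < d^2 + \<epsilon>" if e: "\<epsilon> > 0" for \<epsilon>
  proof -
    define r where "r = sqrt (d^2 + \<epsilon>)"
    have "d^2 < r^2" using e d0 by (simp add: r_def)
    moreover have "0 \<le> r" using e by (simp add: r_def)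
    ultimately have dr: "d < r" by (rule power_less_imp_less_base)
    then obtain v where "v \<in> D" "v < r" using cInf_lessD[OF Dne] unfolding d_def by blast
    then obtain m where m: "m \<in> M" "norm (x - m) < r" unfolding D_def by blast
    then have "(norm (x - m))^2 < r^2" by (simp add: power_strict_mono)
    also have "r^2 = d^2 + \<epsilon>" using e d0 by (simp add: r_def)
    finally show ?thesis using m by blast
  qed
  have "\<forall>k. \<exists>m. m \<in> M \<and> (norm (x - m))^2 < d^2 + 1 / real (Suc k)"
  proof
    fix k have "(0::real) < 1 / real (Suc k)" by simp
    from approx[OF this] show "\<exists>m. m \<in> M \<and> (norm (x - m))^2 < d^2 + 1 / real (Suc k)" by blast
  qed
  then obtain ms where ms: "\<And>k. ms k \<in> M" "\<And>k. (norm (x - ms k))^2 < d^2 + 1 / real (Suc k)"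
    by metis
  have par: "(norm (ms j - ms k))^2 \<le> 2 / real (Suc j) + 2 / real (Suc k)" for j k
  proof -
    define a where "a = x - ms j"
    define b where "b = x - ms k"
    define mid where "mid = scaleR (1/2) (ms j + ms k)"
    have midM: "mid \<in> M" using sub ms(1)[of j] ms(1)[of k] unfolding mid_def csubspace_def scaleR_scaleC
      by blast
    have ab: "a + b = scaleR 2 (x - mid)" unfolding a_def b_def mid_def
      by (simp add: algebra_simps scaleR_add_right scaleR_2)
    have "norm (a + b) = 2 * norm (x - mid)" unfolding ab by simp
    then have "(norm (a + b))^2 = 4 * (norm (x - mid))^2" by (simp add: power_mult_distrib)
    moreover have "d^2 \<le> (norm (x - mid))^2" using dle midM d0 by (simp add: power_mono)
    ultimately have 1: "4 * d^2 \<le> (norm (a + b))^2" by simp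
    have 2: "norm (a - b) = norm (ms j - ms k)" unfolding a_def b_def by (simp add: norm_minus_commute)
    have "(norm (a - b))^2 = 2*(norm a)^2 + 2*(norm b)^2 - (norm (a + b))^2"
      using parallelogram[of a b] by simp
    then show ?thesis using 1 2 ms(2)[of j] ms(2)[of k] unfolding a_def b_def by simp
  qed
  have "Cauchy ms"
    unfolding Cauchy_def
  proof (intro allI impI)
    fix e :: real assume e: "e > 0"
    obtain N where N: "4 / e^2 < real N" using reals_Archimedean2 by blast
    have "4 / real (Suc N) < e^2" using N e by (simp add: field_simps) (smt (verit) zero_less_power)
    show "\<exists>N. \<forall>m\<ge>N. \<forall>n\<ge>N. dist (ms m) (ms n) < e"
    proof (intro exI allI impI)
      fix j k assume jk: "N \<le> j" "N \<le> k"
      have "2 / real (Suc j) \<le> 2 / real (Suc N)" using jk by (simp add: frac_le)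
      moreover have "2 / real (Suc k) \<le> 2 / real (Suc N)" using jk by (simp add: frac_le)
      ultimately have "(norm (ms j - ms k))^2 < e^2"
        using par[of j k] \<open>4 / real (Suc N) < e^2\<close> by linarith
      then show "dist (ms j) (ms k) < e" using e by (simp add: dist_norm power_less_imp_less_base)
    qed
  qed
  then obtain m where lim: "ms \<longlonglongrightarrow> m" using Cauchy_convergent_iff convergent_def by blast
  have mM: "m \<in> M" using closed_sequentially[OF cl ms(1) lim] .
  have "(\<lambda>k. (norm (x - ms k))^2) \<longlonglongrightarrow> (norm (x - m))^2"
    using lim by (intro tendsto_intros)
  moreover have "(\<lambda>k. d^2 + inverse (real (Suc k))) \<longlonglongrightarrow> d^2"
    by (rule LIMSEQ_inverse_real_of_nat_add)
  ultimately have zd: "(norm (x - m))^2 \<le> d^2"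
    by (rule LIMSEQ_le) (use ms(2) in \<open>auto simp: divide_inverse less_imp_le\<close>)
  show ?thesis
  proof (intro bexI[OF _ mM] ballI)
    fix n assume nM: "n \<in> M"
    define z where "z = x - m"
    define c where "c = cinner z n"
    show "cinner (x - m) n = 0"
    proof (rule ccontr)
      assume "cinner (x - m) n \<noteq> 0"
      then have c0: "c \<noteq> 0" by (simp add: c_def z_def)
      define s where "s = 1 / ((norm n)^2 + 1)"
      have np: "(norm n)^2 + 1 > 0" by (smt (verit) zero_le_power2)
      then have s0: "s > 0" by (simp add: s_def)
      define t where "t = of_real s * c"
      have "m + scaleC t n \<in> M" using sub mM nM unfolding csubspace_def by blast
      then have "d \<le> norm (x - (m + scaleC t n))" using dle by blast
      then have "d^2 \<le> (norm (z - scaleC t n))^2" using d0 by (simp add: z_def power_mono algebra_simps)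
      then have le: "(norm z)^2 \<le> (norm (z - scaleC t n))^2" using zd unfolding z_def by linarith
      have wc: "c * cnj c = (of_real (cmod c))^2" by (metis complex_norm_square of_real_power)
      have "complex_of_real ((norm (z - scaleC t n))^2) =
         of_real ((norm z)^2) - cnj t * c - t * cnj c + t * cnj t * of_real ((norm n)^2)"
        unfolding c_def by (rule norm_diff_scaleC_sq)
      also have "\<dots> = of_real ((norm z)^2 - 2 * s * (cmod c)^2 + s^2 * (cmod c)^2 * (norm n)^2)"
      proof -
        have e1: "cnj t * c = of_real s * (c * cnj c)" by (simp add: t_def)
        have e2: "t * cnj c = of_real s * (c * cnj c)" by (simp add: t_def)
        have e3: "t * cnj t = of_real s ^ 2 * (c * cnj c)" by (simp add: t_def power2_eq_square)
        show ?thesis unfolding e1 e2 e3 wc by (simp add: algebra_simps)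
      qed
      finally have "(norm (z - scaleC t n))^2 = (norm z)^2 - 2 * s * (cmod c)^2 + s^2 * (cmod c)^2 * (norm n)^2"
        using of_real_eq_iff by blast
      with le have "2 * s * (cmod c)^2 \<le> s * (cmod c)^2 * (s * (norm n)^2)"
        by (simp add: power2_eq_square algebra_simps)
      moreover have "s * (cmod c)^2 > 0" using s0 c0 by simp
      ultimately have "2 \<le> s * (norm n)^2"
        by (metis mult.assoc mult.commute mult_le_cancel_left_pos)
      moreover have "s * (norm n)^2 < 1" using np by (simp add: s_def)
      ultimately show False by simp
    qed
  qed
qed




lemma scaleC_diff_right: "scaleC c ((x::'a::complex_inner) - y) = scaleC c x - scaleC c y"
  by (rule cinner_ext) (simp add: cinner_scaleC_left cinner_diff_left algebra_simps)

lemma pythag: "cinner (a::'a::complex_inner) b = 0 \<Longrightarrow> (norm (a + b))^2 = (norm a)^2 + (norm b)^2"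
proof -
  assume ab: "cinner a b = 0"
  then have ba: "cinner b a = 0" by (metis cinner_commute complex_cnj_zero)
  have "complex_of_real ((norm (a + b))^2) = cinner (a+b) (a+b)" by (simp only: cinner_self_norm)
  also have "\<dots> = cinner a a + cinner b b" by (simp add: cinner_add_left cinner_add_right ab ba)
  also have "\<dots> = complex_of_real ((norm a)^2 + (norm b)^2)" by (simp add: cinner_self_norm)
  finally show ?thesis using of_real_eq_iff by blast
qed

lemma riesz:
  fixes f :: "'a::chilbert \<Rightarrow> complex"
  assumes add: "\<And>x y. f (x+y) = f x + f y" and hom: "\<And>c x. f (scaleC c x) = c * f x"
    and cl: "closed {x. f x = 0}"
  shows "\<exists>z. \<forall>x. f x = cinner x z"
proof (cases "\<forall>x. f x = 0")
  case True then show ?thesis by (intro exI[of _ 0]) simp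
next
  case False
  then obtain x0 where fx0: "f x0 \<noteq> 0" by blast
  have fdiff: "f (a - b) = f a - f b" for a b using add[of "a - b" b] by simp
  define K where "K = {x. f x = 0}"
  have f0: "f 0 = 0" using fdiff[of 0 0] by simp
  have sub: "csubspace K" unfolding csubspace_def K_def using f0 add hom by simp
  obtain m where m: "m \<in> K" "\<forall>n\<in>K. cinner (x0 - m) n = 0"
    using proj_exists[OF sub cl[folded K_def]] by blast
  define z0 where "z0 = x0 - m"
  have fz0: "f z0 = f x0" using m(1) by (simp add: z0_def fdiff K_def)
  have z0: "z0 \<noteq> 0" using fz0 fx0 f0 by auto
  define N where "N = cinner z0 z0"
  have N: "N \<noteq> 0" using z0 by (simp add: N_def cinner_self_eq_0)
  show ?thesis
  proof (intro exI allI)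
    fix x
    define w where "w = scaleC (f x) z0 - scaleC (f z0) x"
    have "f w = 0" by (simp add: w_def fdiff hom)
    then have "cinner z0 w = 0" using m(2) by (simp add: K_def z0_def)
    then have "cinner w z0 = 0" by (metis cinner_commute complex_cnj_zero)
    then have "f x * N - f z0 * cinner x z0 = 0"
      by (simp add: w_def cinner_diff_left cinner_scaleC_left N_def)
    then have "f x = f z0 * cinner x z0 / N" using N by (simp add: field_simps)
    also have "\<dots> = cinner x (scaleC (cnj (f z0 / N)) z0)" by (simp add: cinner_scaleC_right)
    finally show "f x = cinner x (scaleC (cnj (f z0 / N)) z0)" .
  qed
qed

lemma adjoint_exists:
  fixes T :: "'a::chilbert \<Rightarrow> 'a"
  assumes "bounded_op T" shows "\<exists>S. is_adjoint T S"
proof -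
  have lin: "clinear T" using assms unfolding bounded_op_def by blast
  have bl: "bounded_linear T" using bounded_op_bl[OF assms] .
  have "\<forall>y. \<exists>z. \<forall>x. cinner (T x) y = cinner x z"
  proof
    fix y
    show "\<exists>z. \<forall>x. cinner (T x) y = cinner x z"
    proof (rule riesz)
      fix a b show "cinner (T (a + b)) y = cinner (T a) y + cinner (T b) y"
        using lin unfolding clinear_def by (simp add: cinner_add_left)
    next
      fix c a show "cinner (T (scaleC c a)) y = c * cinner (T a) y"
        using lin unfolding clinear_def by (simp add: cinner_scaleC_left)
    next
      have "bounded_linear (\<lambda>x. cinner (T x) y)"
        using bounded_linear_compose[OF bounded_linear_cinner_left[of y] bl] by (simp add: o_def)
      then have "continuous_on UNIV (\<lambda>x. cinner (T x) y)"
        using bounded_linear.continuous_on[OF _ continuous_on_id] by blast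
      then show "closed {x. cinner (T x) y = 0}"
        by (rule closed_Collect_eq) (rule continuous_on_const)
    qed
  qed
  then obtain S where "\<forall>y x. cinner (T x) y = cinner x (S y)" by metis
  then show ?thesis unfolding is_adjoint_def by blast
qed

lemma is_adjoint_adj: "bounded_op (T::'a::chilbert \<Rightarrow> 'a) \<Longrightarrow> is_adjoint T (adj T)"
  unfolding adj_def using adjoint_exists someI_ex by metis

lemma is_adjoint_sym: "is_adjoint T S \<Longrightarrow> is_adjoint S T"
  unfolding is_adjoint_def by (metis cinner_commute)

lemma adjoint_unique: "is_adjoint T S1 \<Longrightarrow> is_adjoint T S2 \<Longrightarrow> S1 = S2"
proof
  fix y assume a: "is_adjoint T S1" "is_adjoint T S2"
  show "S1 y = S2 y"
  proof (rule cinner_ext)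
    fix z
    have "cinner z (S1 y) = cinner z (S2 y)" using a unfolding is_adjoint_def by metis
    then show "cinner (S1 y) z = cinner (S2 y) z" by (metis cinner_commute)
  qed
qed

lemma adj_eq: "is_adjoint T S \<Longrightarrow> adj T = S"
  unfolding adj_def using adjoint_unique someI by metis

lemma adjoint_bounded:
  assumes T: "bounded_op T" and TS: "is_adjoint T S"
  shows "bounded_op S"
proof -
  have ST: "is_adjoint S T" using is_adjoint_sym[OF TS] .
  obtain K where K: "\<forall>x. norm (T x) \<le> K * norm x" using T unfolding bounded_op_def by blast
  have "clinear S" unfolding clinear_def
  proof (intro conjI allI)
    fix x y show "S (x + y) = S x + S y"
      by (rule cinner_ext) (use ST in \<open>simp add: is_adjoint_def cinner_add_left\<close>)
  next
    fix c x show "S (scaleC c x) = scaleC c (S x)"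
      by (rule cinner_ext) (use ST in \<open>simp add: is_adjoint_def cinner_scaleC_left\<close>)
  qed
  moreover have "norm (S y) \<le> K * norm y" for y
  proof (cases "norm (S y) = 0")
    case True
    have "0 \<le> K * norm y" using K[rule_format, of y] norm_ge_zero[of "T y"] by linarith
    then show ?thesis using True by simp
  next
    case False
    have "(norm (S y))^2 = Re (cinner (S y) (S y))" by (simp add: Re_cinner_self)
    also have "\<dots> = Re (cinner y (T (S y)))" using ST unfolding is_adjoint_def by simp
    also have "\<dots> \<le> cmod (cinner y (T (S y)))" by (rule complex_Re_le_cmod)
    also have "\<dots> \<le> norm y * norm (T (S y))" by (rule cauchy_schwarz)
    also have "\<dots> \<le> norm y * (K * norm (S y))" using K by (simp add: mult_left_mono)
    finally have "norm (S y) * norm (S y) \<le> (K * norm y) * norm (S y)"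
      by (simp add: power2_eq_square algebra_simps)
    then show ?thesis using False by (simp add: mult_le_cancel_right)
  qed
  ultimately show ?thesis unfolding bounded_op_def by blast
qed




definition projM :: "'a::chilbert set \<Rightarrow> 'a \<Rightarrow> 'a" where
  "projM M x = (SOME m. m \<in> M \<and> (\<forall>n\<in>M. cinner (x - m) n = 0))"

lemma projM_prop:
  assumes "csubspace M" "closed M"
  shows "projM M x \<in> M \<and> (\<forall>n\<in>M. cinner (x - projM M x) n = 0)"
proof -
  have "\<exists>m. m \<in> M \<and> (\<forall>n\<in>M. cinner (x - m) n = 0)" using proj_exists[OF assms, of x] by blast
  from someI_ex[OF this] show ?thesis unfolding projM_def .
qed

lemma projM_unique:
  assumes sub: "csubspace M" and cl: "closed M" and m: "m \<in> M" "\<forall>n\<in>M. cinner (x - m) n = 0"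
  shows "projM M x = m"
proof -
  define p where "p = projM M x"
  have p: "p \<in> M" "\<forall>n\<in>M. cinner (x - p) n = 0" using projM_prop[OF sub cl, of x] p_def by auto
  define d where "d = p - m"
  have dM: "d \<in> M" using csubspace_diff[OF sub p(1) m(1)] d_def by simp
  have "d = (x - m) - (x - p)" by (simp add: d_def)
  then have "cinner d d = cinner (x - m) d - cinner (x - p) d" by (metis cinner_diff_left)
  also have "\<dots> = 0" using dM m p by simp
  finally have "d = 0" by (simp only: cinner_self_eq_0)
  then have "p = m" unfolding d_def by simp
  then show ?thesis unfolding p_def .
qed

lemma projM_fix: "csubspace M \<Longrightarrow> closed M \<Longrightarrow> x \<in> M \<Longrightarrow> projM M x = x"
  by (rule projM_unique) simp_all

lemma projM_adj:
  assumes sub: "csubspace M" and cl: "closed M"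
  shows "is_adjoint (projM M) (projM M)"
  unfolding is_adjoint_def
proof (intro allI)
  fix x y
  let ?P = "projM M"
  have px: "?P x \<in> M" "\<forall>n\<in>M. cinner (x - ?P x) n = 0" using projM_prop[OF sub cl] by auto
  have py: "?P y \<in> M" "\<forall>n\<in>M. cinner (y - ?P y) n = 0" using projM_prop[OF sub cl] by auto
  have "cinner (y - ?P y) (?P x) = 0" using py px by blast
  then have 1: "cinner (?P x) (y - ?P y) = 0" by (metis cinner_commute complex_cnj_zero)
  have 2: "cinner (x - ?P x) (?P y) = 0" using py px by blast
  have "cinner (?P x) y = cinner (?P x) (?P y)" using 1 by (simp add: cinner_diff_right)
  also have "\<dots> = cinner x (?P y)" using 2 by (simp add: cinner_diff_left)
  finally show "cinner (?P x) y = cinner x (?P y)" .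
qed

lemma projM_bounded:
  assumes sub: "csubspace M" and cl: "closed M"
  shows "bounded_op (projM M)"
proof -
  let ?P = "projM M"
  have pr: "?P x \<in> M" "\<forall>n\<in>M. cinner (x - ?P x) n = 0" for x using projM_prop[OF sub cl] by auto
  have "clinear ?P" unfolding clinear_def
  proof (intro conjI allI)
    fix x y
    show "?P (x + y) = ?P x + ?P y"
    proof (rule projM_unique[OF sub cl])
      show "?P x + ?P y \<in> M" using sub pr unfolding csubspace_def by blast
      show "\<forall>n\<in>M. cinner (x + y - (?P x + ?P y)) n = 0"
      proof
        fix n assume n: "n \<in> M"
        have e: "x + y - (?P x + ?P y) = (x - ?P x) + (y - ?P y)" by simp
        show "cinner (x + y - (?P x + ?P y)) n = 0" unfolding e cinner_add_left using pr n by simp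
      qed
    qed
  next
    fix c x
    show "?P (scaleC c x) = scaleC c (?P x)"
    proof (rule projM_unique[OF sub cl])
      show "scaleC c (?P x) \<in> M" using sub pr unfolding csubspace_def by blast
      show "\<forall>n\<in>M. cinner (scaleC c x - scaleC c (?P x)) n = 0"
        using pr by (simp add: scaleC_diff_right[symmetric] cinner_scaleC_left)
    qed
  qed
  moreover have "norm (?P x) \<le> 1 * norm x" for x
  proof -
    have "cinner (?P x) (x - ?P x) = 0" using pr[of x] by (metis cinner_commute complex_cnj_zero)
    then have "(norm (?P x + (x - ?P x)))^2 = (norm (?P x))^2 + (norm (x - ?P x))^2" by (rule pythag)
    then have "(norm (?P x))^2 \<le> (norm x)^2" by simp
    then show ?thesis by (simp add: power2_le_iff_abs_le)
  qed
  ultimately show ?thesis unfolding bounded_op_def by blast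
qed

lemma projM_idem: "csubspace M \<Longrightarrow> closed M \<Longrightarrow> projM M \<circ> projM M = projM M"
  by (rule ext) (simp add: projM_fix projM_prop)

lemma bounded_op_id: "bounded_op (id :: 'a::complex_inner \<Rightarrow> 'a)"
  unfolding bounded_op_def clinear_def by (auto intro: exI[of _ 1])

lemma id_commutant: "id \<in> commutant X"
  unfolding commutant_def using bounded_op_id by auto

lemma bounded_op_clinear: "bounded_op T \<Longrightarrow> clinear T"
  unfolding bounded_op_def by blast

lemma commutant_comb:
  assumes X: "\<forall>S\<in>X. bounded_op S" and T1: "T1 \<in> commutant X" and T2: "T2 \<in> commutant X"
  shows "(\<lambda>x. scaleC c1 (T1 x) + scaleC c2 (T2 x)) \<in> commutant X"
proof -
  let ?F = "\<lambda>x. scaleC c1 (T1 x) + scaleC c2 (T2 x)"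
  have b1: "bounded_op T1" and b2: "bounded_op T2" using T1 T2 unfolding commutant_def by auto
  obtain K1 where K1: "\<forall>x. norm (T1 x) \<le> K1 * norm x" using b1 unfolding bounded_op_def by blast
  obtain K2 where K2: "\<forall>x. norm (T2 x) \<le> K2 * norm x" using b2 unfolding bounded_op_def by blast
  have l1: "clinear T1" and l2: "clinear T2" using b1 b2 bounded_op_clinear by auto
  have "clinear ?F" unfolding clinear_def
  proof (intro conjI allI)
    fix x y
    have t1: "T1 (x + y) = T1 x + T1 y" using l1 unfolding clinear_def by blast
    have t2: "T2 (x + y) = T2 x + T2 y" using l2 unfolding clinear_def by blast
    show "?F (x + y) = ?F x + ?F y" unfolding t1 t2 scaleC_add_right by (simp only: add_ac)
  next
    fix c x
    have t1: "T1 (scaleC c x) = scaleC c (T1 x)" using l1 unfolding clinear_def by blast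
    have t2: "T2 (scaleC c x) = scaleC c (T2 x)" using l2 unfolding clinear_def by blast
    show "?F (scaleC c x) = scaleC c (?F x)" unfolding t1 t2 scaleC_add_right scaleC_scaleC
      by (simp only: mult.commute)
  qed
  moreover have "norm (?F x) \<le> (cmod c1 * K1 + cmod c2 * K2) * norm x" for x
  proof -
    have "norm (?F x) \<le> norm (scaleC c1 (T1 x)) + norm (scaleC c2 (T2 x))" by (rule norm_triangle_ineq)
    also have "\<dots> = cmod c1 * norm (T1 x) + cmod c2 * norm (T2 x)" by (simp add: norm_scaleC)
    also have "\<dots> \<le> cmod c1 * (K1 * norm x) + cmod c2 * (K2 * norm x)"
      using K1 K2 by (intro add_mono mult_left_mono) auto
    finally show ?thesis by (simp add: algebra_simps)
  qed
  moreover have "?F \<circ> S = S \<circ> ?F" if S: "S \<in> X" for S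
  proof
    fix x
    have lS: "clinear S" using X S bounded_op_clinear by blast
    have c1: "T1 (S x) = S (T1 x)" and c2: "T2 (S x) = S (T2 x)"
      using T1 T2 S unfolding commutant_def by (auto dest!: bspec[of _ _ S] simp: fun_eq_iff)
    have s1: "S (scaleC c1 (T1 x) + scaleC c2 (T2 x)) = S (scaleC c1 (T1 x)) + S (scaleC c2 (T2 x))"
      using lS unfolding clinear_def by blast
    have s2: "S (scaleC c1 (T1 x)) = scaleC c1 (S (T1 x))" "S (scaleC c2 (T2 x)) = scaleC c2 (S (T2 x))"
      using lS unfolding clinear_def by blast+
    show "(?F \<circ> S) x = (S \<circ> ?F) x" unfolding comp_apply s1 s2 c1 c2 ..
  qed
  ultimately show ?thesis unfolding commutant_def bounded_op_def by blast
qed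

lemma commutant_comp:
  assumes T1: "T1 \<in> commutant X" and T2: "T2 \<in> commutant X"
  shows "T1 \<circ> T2 \<in> commutant X"
proof -
  have b1: "bounded_op T1" and b2: "bounded_op T2" using T1 T2 unfolding commutant_def by auto
  obtain K1 where K1: "\<forall>x. norm (T1 x) \<le> K1 * norm x" using b1 unfolding bounded_op_def by blast
  obtain K2 where K2: "\<forall>x. norm (T2 x) \<le> K2 * norm x" using b2 unfolding bounded_op_def by blast
  have l1: "clinear T1" and l2: "clinear T2" using b1 b2 bounded_op_clinear by auto
  have "clinear (T1 \<circ> T2)" using l1 l2 unfolding clinear_def by simp
  moreover have "norm ((T1 \<circ> T2) x) \<le> (\<bar>K1\<bar> * \<bar>K2\<bar>) * norm x" for x
  proof -
    have "norm (T1 (T2 x)) \<le> \<bar>K1\<bar> * norm (T2 x)" using K1 by (smt (verit) mult_right_mono norm_ge_zero)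
    also have "\<dots> \<le> \<bar>K1\<bar> * (\<bar>K2\<bar> * norm x)" using K2
      by (intro mult_left_mono) (smt (verit) mult_right_mono norm_ge_zero, simp)
    finally show ?thesis by (simp add: mult.assoc)
  qed
  moreover have "(T1 \<circ> T2) \<circ> S = S \<circ> (T1 \<circ> T2)" if "S \<in> X" for S
  proof -
    have e1: "T1 \<circ> S = S \<circ> T1" and e2: "T2 \<circ> S = S \<circ> T2" using T1 T2 that unfolding commutant_def by auto
    show ?thesis
    proof
      fix x
      have "T2 (S x) = S (T2 x)" using fun_cong[OF e2, of x] by simp
      moreover have "T1 (S (T2 x)) = S (T1 (T2 x))" using fun_cong[OF e1, of "T2 x"] by simp
      ultimately show "((T1 \<circ> T2) \<circ> S) x = (S \<circ> (T1 \<circ> T2)) x" by simp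
    qed
  qed
  ultimately show ?thesis unfolding commutant_def bounded_op_def by blast
qed

lemma image_closure_subset:
  assumes "bounded_op T" "T ` S \<subseteq> C" "closed C"
  shows "T ` closure S \<subseteq> C"
proof -
  have "continuous_on UNIV T"
    using bounded_linear.continuous_on[OF bounded_op_bl[OF assms(1)] continuous_on_id] by simp
  then have "closed (T -` C)" using assms(3) by (intro closed_vimage)
  moreover have "S \<subseteq> T -` C" using assms(2) by blast
  ultimately have "closure S \<subseteq> T -` C" by (rule closure_minimal[rotated])
  then show ?thesis by blast
qed




theorem mainTheorem6:
  fixes A :: "('a::chilbert \<Rightarrow> 'a) set" and \<xi> :: 'a and eA :: "'a \<Rightarrow> 'a"
  assumes "von_neumann_algebra A"
    and "is_support_projection A \<xi> eA"
    and "\<forall>a\<in>A. adj a = a \<longrightarrow>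
           (\<forall>\<epsilon>>0. \<exists>ah\<in>commutant A. norm (a \<xi> - ah \<xi>) < \<epsilon>)"
  shows "\<forall>a\<in>A. eA \<circ> a = a \<circ> eA"
proof -
  note vN = assms(1) and sp = assms(2) and hyp = assms(3)
  define A' where "A' = commutant A"
  have bA: "\<forall>T\<in>A. bounded_op T" and adjA: "\<forall>T\<in>A. adj T \<in> A" and AA: "commutant A' = A"
    using vN unfolding von_neumann_algebra_def A'_def by auto
  have bA': "\<forall>T\<in>A'. bounded_op T" unfolding A'_def commutant_def by auto
  have idA': "id \<in> A'" unfolding A'_def by (rule id_commutant)
  have idA: "id \<in> A" using AA id_commutant by blast
  have commAA': "T \<circ> b = b \<circ> T" if "T \<in> A" "b \<in> A'" for T b
    using that unfolding A'_def commutant_def by auto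
  have commAA'x: "T (b x) = b (T x)" if "T \<in> A" "b \<in> A'" for T b x
    using fun_cong[OF commAA'[OF that], of x] by simp
  have adjT: "is_adjoint T (adj T)" if "T \<in> A" for T using is_adjoint_adj bA that by blast
  have adjT': "is_adjoint (adj T) T" if "T \<in> A" for T using is_adjoint_sym adjT that by blast
  define S0 where "S0 = (\<lambda>b. b \<xi>) ` A'"
  have S0sub: "csubspace S0" unfolding csubspace_def
  proof (intro conjI ballI allI)
    have "(\<lambda>x. scaleC 0 (id x) + scaleC 0 (id x)) \<in> A'" using commutant_comb[of A id id 0 0] bA idA' A'_def by simp
    then show "0 \<in> S0" unfolding S0_def by (rule image_eqI[rotated]) simp
  next
    fix u v assume "u \<in> S0" "v \<in> S0"
    then obtain b c where b: "b \<in> A'" "u = b \<xi>" and c: "c \<in> A'" "v = c \<xi>" unfolding S0_def by blast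
    have "(\<lambda>x. scaleC 1 (b x) + scaleC 1 (c x)) \<in> A'" using commutant_comb[of A b c 1 1] bA b c A'_def by simp
    then show "u + v \<in> S0" unfolding S0_def by (rule image_eqI[rotated]) (simp add: b c)
  next
    fix k u assume "u \<in> S0"
    then obtain b where b: "b \<in> A'" "u = b \<xi>" unfolding S0_def by blast
    have "(\<lambda>x. scaleC k (b x) + scaleC 0 (b x)) \<in> A'" using commutant_comb[of A b b k 0] bA b A'_def by simp
    then show "scaleC k u \<in> S0" unfolding S0_def by (rule image_eqI[rotated]) (simp add: b)
  qed
  define M where "M = closure S0"
  have Msub: "csubspace M" unfolding M_def using csubspace_closure[OF S0sub] .
  have Mcl: "closed M" unfolding M_def by simp
  have "\<xi> \<in> S0" unfolding S0_def using idA' by (rule image_eqI[rotated]) simp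
  then have xiM: "\<xi> \<in> M" unfolding M_def using closure_subset by blast
  have b_M: "b ` M \<subseteq> M" if b: "b \<in> A'" for b
  proof -
    have "b ` S0 \<subseteq> S0"
    proof
      fix u assume "u \<in> b ` S0"
      then obtain c where c: "c \<in> A'" "u = b (c \<xi>)" unfolding S0_def by blast
      have "b \<circ> c \<in> A'" using commutant_comp b c A'_def by blast
      then show "u \<in> S0" unfolding S0_def by (rule image_eqI[rotated]) (simp add: c)
    qed
    then have bS: "b ` S0 \<subseteq> M" unfolding M_def using closure_subset by blast
    have "bounded_op b" using bA' b by blast
    from image_closure_subset[OF this bS Mcl] have "b ` closure S0 \<subseteq> M" .
    then show ?thesis by (simp add: M_def)
  qed
  have adjb: "adj b \<in> A' \<and> is_adjoint b (adj b)" if b: "b \<in> A'" for b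
  proof -
    have bb: "bounded_op b" using bA' b by blast
    have ab: "is_adjoint b (adj b)" using is_adjoint_adj[OF bb] .
    have ab': "is_adjoint (adj b) b" using is_adjoint_sym[OF ab] .
    have "bounded_op (adj b)" using adjoint_bounded[OF bb ab] .
    moreover have "adj b \<circ> T = T \<circ> adj b" if T: "T \<in> A" for T
    proof
      fix x
      show "(adj b \<circ> T) x = (T \<circ> adj b) x"
      proof (rule cinner_ext)
        fix z
        have "cinner (adj b (T x)) z = cinner (T x) (b z)" using ab' unfolding is_adjoint_def by blast
        also have "\<dots> = cinner x (adj T (b z))" using adjT[OF T] unfolding is_adjoint_def by blast
        also have "\<dots> = cinner x (b (adj T z))" using commAA'x[OF adjA[rule_format, OF T] b] by simp
        also have "\<dots> = cinner (adj b x) (adj T z)" using ab' unfolding is_adjoint_def by simp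
        also have "\<dots> = cinner (T (adj b x)) z" using adjT[OF T] unfolding is_adjoint_def by simp
        finally show "cinner ((adj b \<circ> T) x) z = cinner ((T \<circ> adj b) x) z" by simp
      qed
    qed
    ultimately show ?thesis using ab unfolding A'_def commutant_def by blast
  qed
  define q where "q = projM M"
  have qb: "bounded_op q" unfolding q_def using projM_bounded[OF Msub Mcl] .
  have qadj: "is_adjoint q q" unfolding q_def using projM_adj[OF Msub Mcl] .
  have qpr: "q x \<in> M \<and> (\<forall>n\<in>M. cinner (x - q x) n = 0)" for x
    unfolding q_def using projM_prop[OF Msub Mcl] .
  have qu: "q x = m" if "m \<in> M" "\<forall>n\<in>M. cinner (x - m) n = 0" for x m
    unfolding q_def using projM_unique[OF Msub Mcl] that by blast
  have qA: "q \<in> A"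
  proof -
    have "q \<circ> b = b \<circ> q" if b: "b \<in> A'" for b
    proof
      fix x
      have "q (b x) = b (q x)"
      proof (rule qu)
        show "b (q x) \<in> M" using b_M[OF b] qpr by blast
        show "\<forall>n\<in>M. cinner (b x - b (q x)) n = 0"
        proof
          fix n assume n: "n \<in> M"
          have lb: "clinear b" using bA' b bounded_op_clinear by blast
          have "b x - b (q x) = b (x - q x)" using clinear_diff[OF lb] by simp
          then have "cinner (b x - b (q x)) n = cinner (x - q x) (adj b n)"
            using adjb[OF b] unfolding is_adjoint_def by simp
          moreover have "adj b n \<in> M" using b_M adjb[OF b] n by blast
          ultimately show "cinner (b x - b (q x)) n = 0" using qpr by simp
        qed
      qed
      then show "(q \<circ> b) x = (b \<circ> q) x" by simp
    qed
    then have "q \<in> commutant A'" unfolding commutant_def using qb by blast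
    then show ?thesis using AA by simp
  qed
  have qxi: "q \<xi> = \<xi>" unfolding q_def using projM_fix[OF Msub Mcl xiM] .
  have qproj: "is_projection q" unfolding is_projection_def
    using qb adj_eq[OF qadj] projM_idem[OF Msub Mcl] q_def by simp
  have qomega: "\<forall>x\<in>A. omega \<xi> x = omega \<xi> (q \<circ> x \<circ> q)"
  proof
    fix x assume "x \<in> A"
    have "cinner (q (x (q \<xi>))) \<xi> = cinner (x \<xi>) (q \<xi>)" using qadj qxi unfolding is_adjoint_def by simp
    then show "omega \<xi> x = omega \<xi> (q \<circ> x \<circ> q)" unfolding omega_def using qxi by simp
  qed
  have eA: "eA \<in> A" "is_projection eA" "\<forall>x\<in>A. omega \<xi> x = omega \<xi> (eA \<circ> x \<circ> eA)"
    and qe: "q \<circ> eA = eA"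
    using sp qA qproj qomega unfolding is_support_projection_def by blast+
  have eb: "bounded_op eA" and eidem: "eA \<circ> eA = eA" and eadj0: "adj eA = eA"
    using eA(2) unfolding is_projection_def by auto
  have eadj: "is_adjoint eA eA" using is_adjoint_adj[OF eb] eadj0 by simp
  have eidemx: "eA (eA x) = eA x" for x using fun_cong[OF eidem, of x] by simp
  have eM: "eA x \<in> M" for x
  proof -
    have "q (eA x) = eA x" using fun_cong[OF qe, of x] by simp
    then show ?thesis using qpr[of "eA x"] by simp
  qed
  have exi: "eA \<xi> = \<xi>"
  proof -
    have "omega \<xi> id = omega \<xi> (eA \<circ> id \<circ> eA)" using eA(3) idA by blast
    then have 1: "cinner \<xi> \<xi> = cinner (eA \<xi>) \<xi>" unfolding omega_def by (simp add: eidemx)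
    have 2: "cinner (eA \<xi>) (eA \<xi>) = cinner (eA \<xi>) \<xi>"
      using eadj eidemx unfolding is_adjoint_def by metis
    have 3: "cinner \<xi> (eA \<xi>) = cinner (eA \<xi>) \<xi>" using eadj unfolding is_adjoint_def by metis
    have "cinner (\<xi> - eA \<xi>) (\<xi> - eA \<xi>) = 0"
      by (simp add: cinner_diff_left cinner_diff_right 1 2 3)
    then show ?thesis by (simp add: cinner_self_eq_0)
  qed
  have fixM: "eA m = m" if "m \<in> M" for m
  proof -
    have "S0 \<subseteq> {x. eA x = x}"
    proof
      fix u assume "u \<in> S0"
      then obtain b where b: "b \<in> A'" "u = b \<xi>" unfolding S0_def by blast
      have "eA (b \<xi>) = b (eA \<xi>)" using commAA'x[OF eA(1) b(1)] .
      then show "u \<in> {x. eA x = x}" using b exi by simp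
    qed
    moreover have "closed {x. eA x = x}"
    proof (rule closed_Collect_eq)
      show "continuous_on UNIV eA"
        using bounded_linear.continuous_on[OF bounded_op_bl[OF eb] continuous_on_id] by simp
    qed (rule continuous_on_id)
    ultimately have "M \<subseteq> {x. eA x = x}" unfolding M_def by (rule closure_minimal)
    then show ?thesis using that by blast
  qed
  have saM: "a \<xi> \<in> M" if a: "a \<in> A" "adj a = a" for a
  proof -
    have "a \<xi> \<in> closure S0" unfolding closure_approachable
    proof (intro allI impI)
      fix e :: real assume "e > 0"
      then obtain ah where "ah \<in> A'" "norm (a \<xi> - ah \<xi>) < e" using hyp a A'_def by blast
      then show "\<exists>y\<in>S0. dist y (a \<xi>) < e" unfolding S0_def
        by (auto simp: dist_norm norm_minus_commute)
    qed
    then show ?thesis unfolding M_def .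
  qed
  have aM: "a \<xi> \<in> M" if a: "a \<in> A" for a
  proof -
    let ?s = "adj a"
    have sA: "?s \<in> A" using adjA a by blast
    have as: "is_adjoint a ?s" using adjT[OF a] .
    have sa: "is_adjoint ?s a" using adjT'[OF a] .
    define h where "h = (\<lambda>x. scaleC (1/2) (a x) + scaleC (1/2) (?s x))"
    define k where "k = (\<lambda>x. scaleC (-\<i>/2) (a x) + scaleC (\<i>/2) (?s x))"
    have aA': "a \<in> commutant A'" and sA': "?s \<in> commutant A'" using a sA AA by auto
    have hA: "h \<in> A" unfolding h_def using commutant_comb[OF bA' aA' sA'] AA by simp
    have kA: "k \<in> A" unfolding k_def using commutant_comb[OF bA' aA' sA'] AA by simp
    have "is_adjoint h h" unfolding is_adjoint_def
    proof (intro allI)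
      fix x y
      have e1: "cinner (a x) y = cinner x (?s y)" using as unfolding is_adjoint_def by blast
      have e2: "cinner (?s x) y = cinner x (a y)" using sa unfolding is_adjoint_def by blast
      show "cinner (h x) y = cinner x (h y)" unfolding h_def
        by (simp add: cinner_add_left cinner_add_right cinner_scaleC_left cinner_scaleC_right e1 e2)
    qed
    then have hsa: "adj h = h" by (rule adj_eq)
    have "is_adjoint k k" unfolding is_adjoint_def
    proof (intro allI)
      fix x y
      have e1: "cinner (a x) y = cinner x (?s y)" using as unfolding is_adjoint_def by blast
      have e2: "cinner (?s x) y = cinner x (a y)" using sa unfolding is_adjoint_def by blast
      show "cinner (k x) y = cinner x (k y)" unfolding k_def
        by (simp add: cinner_add_left cinner_add_right cinner_scaleC_left cinner_scaleC_right e1 e2)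
    qed
    then have ksa: "adj k = k" by (rule adj_eq)
    have hM: "h \<xi> \<in> M" using saM[OF hA hsa] .
    have kM: "k \<xi> \<in> M" using saM[OF kA ksa] .
    have dec: "a \<xi> = h \<xi> + scaleC \<i> (k \<xi>)"
    proof (rule cinner_ext)
      fix z
      show "cinner (a \<xi>) z = cinner (h \<xi> + scaleC \<i> (k \<xi>)) z"
        unfolding h_def k_def
        by (simp add: cinner_add_left cinner_scaleC_left algebra_simps)
    qed
    show ?thesis unfolding dec using hM kM Msub unfolding csubspace_def by blast
  qed
  have a_M: "a ` M \<subseteq> M" if a: "a \<in> A" for a
  proof -
    have "a ` S0 \<subseteq> M"
    proof
      fix u assume "u \<in> a ` S0"
      then obtain b where b: "b \<in> A'" "u = a (b \<xi>)" unfolding S0_def by blast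
      have "u = b (a \<xi>)" using b commAA'x[OF a b(1)] by simp
      then show "u \<in> M" using b_M[OF b(1)] aM[OF a] by blast
    qed
    then have aS: "a ` S0 \<subseteq> M" .
    have "bounded_op a" using bA a by blast
    from image_closure_subset[OF this aS Mcl] have "a ` closure S0 \<subseteq> M" .
    then show ?thesis by (simp add: M_def)
  qed
  show ?thesis
  proof (intro ballI ext)
    fix a x assume a: "a \<in> A"
    have sA: "adj a \<in> A" using adjA a by blast
    have as: "is_adjoint a (adj a)" using adjT[OF a] .
    have 1: "eA (a (eA x)) = a (eA x)" for x using fixM a_M[OF a] eM by blast
    have 2: "eA (adj a (eA y)) = adj a (eA y)" for y using fixM a_M[OF sA] eM by blast
    show "(eA \<circ> a) x = (a \<circ> eA) x"
    proof (rule cinner_ext)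
      fix y
      have "cinner (eA (a x)) y = cinner (a x) (eA y)" using eadj unfolding is_adjoint_def by blast
      also have "\<dots> = cinner x (adj a (eA y))" using as unfolding is_adjoint_def by blast
      also have "\<dots> = cinner x (eA (adj a (eA y)))" using 2 by simp
      also have "\<dots> = cinner (eA x) (adj a (eA y))" using eadj unfolding is_adjoint_def by simp
      also have "\<dots> = cinner (a (eA x)) (eA y)" using as unfolding is_adjoint_def by simp
      also have "\<dots> = cinner (eA (a (eA x))) y" using eadj unfolding is_adjoint_def by simp
      also have "\<dots> = cinner (a (eA x)) y" using 1 by simp
      finally show "cinner ((eA \<circ> a) x) y = cinner ((a \<circ> eA) x) y" by simp
    qed
  qed
qed


end
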